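(* Let $H$ and $K$ be permutation groups on $[p]$ and $[q]$, and let $G=H\otimes K=\{P_h\otimes P_k: h\in H,k\in K\}$, a permutation group on $[pq]$. Let $M\in\mathbb{R}^{pq\times pq}$ satisfy $MP=PM$ for all $P\in G$, and define $\hat M\in\mathbb{R}^{p^2\times q^2}$ by $$\hat M_{(i'-1)p+i,\,(j'-1)q+j}=M_{(i-1)q+j,\,(i'-1)q+j'}\qquad (i,i'\in[p],\ j,j'\in[q]).$$ Then $\mathrm{rank}(\hat M)\le\min\big(\dim\mathcal{E}(H),\dim\mathcal{E}(K)\big)$.
   Context: For a permutation $g$ of $[m]$, $P_g$ is the $m\times m$ permutation matrix with $(P_g)_{i,j}=1$ iff $i=g(j)$; $\otimes$ denotes the Kronecker product. For a permutation group $L$ on $[m]$, $\mathcal{E}(L)=\{X\in\mathbb{R}^{m\times m}: XP_g=P_gX \text{ for all } g\in L\}$. *)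

theory Defs
  imports "HOL-Analysis.Analysis"
begin

definition perm_group :: "('a \<Rightarrow> 'a) set \<Rightarrow> bool" where
  "perm_group L \<longleftrightarrow> (\<forall>g\<in>L. bij g) \<and> id \<in> L \<and>
     (\<forall>g\<in>L. \<forall>h\<in>L. g \<circ> h \<in> L) \<and> (\<forall>g\<in>L. inv g \<in> L)"

definition permmat :: "('n::finite \<Rightarrow> 'n) \<Rightarrow> real^'n^'n" where
  "permmat g = (\<chi> i j. if i = g j then 1 else 0)"

text \<open>Kronecker product; the index (i-1)q+j of [pq] is identified with the pair (i,j).\<close>
definition kron :: "real^'p::finite^'p \<Rightarrow> real^'q::finite^'q \<Rightarrow> real^('p::finite \<times> 'q::finite)^('p \<times> 'q)" where
  "kron A B = (\<chi> r c. (A $ fst r $ fst c) * (B $ snd r $ snd c))"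

definition commutant :: "('n \<Rightarrow> 'n) set \<Rightarrow> (real^'n::finite^'n) set" where
  "commutant L = {X. \<forall>g\<in>L. X ** permmat g = permmat g ** X}"

text \<open>The reshaped matrix: row index (i'-1)p+i is the pair (i',i), column index
(j'-1)q+j is the pair (j',j); entry M_{(i-1)q+j,(i'-1)q+j'}.\<close>
definition reshape :: "real^('p::finite \<times> 'q::finite)^('p \<times> 'q) \<Rightarrow> real^('q \<times> 'q)^('p \<times> 'p)" where
  "reshape M = (\<chi> r c. M $ (snd r, snd c) $ (fst r, fst c))"

end

theory Submission
  imports Defs
begin

lemma mm_permmat_right: "(N ** permmat g) $ a $ b = N $ a $ (g b)"
  by (simp add: matrix_matrix_mult_def permmat_def if_distrib cong: if_cong)

lemma mm_permmat_left:
  assumes "bij g"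
  shows "(permmat g ** N) $ a $ b = N $ (inv g a) $ b"
proof -
  have e: "\<And>c. (a = g c) = (c = inv g a)"
    using assms by (metis bij_inv_eq_iff)
  have "(permmat g ** N) $ a $ b = (\<Sum>c\<in>UNIV. if c = inv g a then N $ c $ b else 0)"
    by (simp add: matrix_matrix_mult_def permmat_def e if_distrib[of "\<lambda>x. x * _"] cong: if_cong)
  then show ?thesis by simp
qed

lemma permmat_comm:
  fixes N :: "real^'n::finite^'n"
  assumes "bij g"
  shows "(N ** permmat g = permmat g ** N) \<longleftrightarrow> (\<forall>a b. N$(g a)$(g b) = N$a$b)"
proof
  assume h: "N ** permmat g = permmat g ** N"
  show "\<forall>a b. N$(g a)$(g b) = N$a$b"
  proof (intro allI)
    fix a b
    have "(N ** permmat g) $ (g a) $ b = (permmat g ** N) $ (g a) $ b" using h by simp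
    then show "N$(g a)$(g b) = N$a$b"
      using assms by (simp add: mm_permmat_right mm_permmat_left bij_is_inj)
  qed
next
  assume h: "\<forall>a b. N$(g a)$(g b) = N$a$b"
  show "N ** permmat g = permmat g ** N"
  unfolding vec_eq_iff
  proof (intro allI)
    fix a b
    have "N $ a $ (g b) = N $ (g (inv g a)) $ (g b)"
      using assms by (simp add: bij_is_surj surj_f_inv_f)
    also have "\<dots> = N $ (inv g a) $ b" using h by simp
    finally show "(N ** permmat g) $ a $ b = (permmat g ** N) $ a $ b"
      using assms by (simp add: mm_permmat_right mm_permmat_left)
  qed
qed

lemma kron_permmat: "kron (permmat h) (permmat k) = permmat (map_prod h k)"
  by (auto simp: kron_def permmat_def vec_eq_iff prod_eq_iff)

lemma bij_map_prod_id1: "bij k \<Longrightarrow> bij (map_prod id k)"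
  by (simp add: bij_def map_prod_surj prod.inj_map)

lemma bij_map_prod_id2: "bij k \<Longrightarrow> bij (map_prod k id)"
  by (simp add: bij_def map_prod_surj prod.inj_map)

theorem mainTheorem4:
  fixes H :: "('p::finite \<Rightarrow> 'p) set" and K :: "('q::finite \<Rightarrow> 'q) set"
    and M :: "real^('p \<times> 'q)^('p \<times> 'q)"
  assumes "perm_group H" and "perm_group K"
    and "\<forall>h\<in>H. \<forall>k\<in>K. M ** kron (permmat h) (permmat k) = kron (permmat h) (permmat k) ** M"
  shows "rank (reshape M) \<le> min (dim (commutant H)) (dim (commutant K))"
proof -
  have idH: "id \<in> H" and idK: "id \<in> K" and bH: "\<And>h. h \<in> H \<Longrightarrow> bij h"
    and bK: "\<And>k. k \<in> K \<Longrightarrow> bij k"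
    using assms(1,2) by (auto simp: perm_group_def)
  have invK: "\<And>k i j i' j'. k \<in> K \<Longrightarrow> M $ (i, k j) $ (i', k j') = M $ (i,j) $ (i',j')"
  proof -
    fix k i j i' j' assume k: "k \<in> K"
    have "M ** permmat (map_prod id k) = permmat (map_prod id k) ** M"
      using assms(3) idH k by (metis kron_permmat)
    then have "\<forall>a b. M$(map_prod id k a)$(map_prod id k b) = M$a$b"
      using permmat_comm bij_map_prod_id1 bK k by blast
    then show "M $ (i, k j) $ (i', k j') = M $ (i,j) $ (i',j')"
      by (metis id_apply map_prod_simp)
  qed
  have invH: "\<And>h i j i' j'. h \<in> H \<Longrightarrow> M $ (h i, j) $ (h i', j') = M $ (i,j) $ (i',j')"
  proof -
    fix h i j i' j' assume h: "h \<in> H"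
    have "M ** permmat (map_prod h id) = permmat (map_prod h id) ** M"
      using assms(3) idK h by (metis kron_permmat)
    then have "\<forall>a b. M$(map_prod h id a)$(map_prod h id b) = M$a$b"
      using permmat_comm bij_map_prod_id2 bH h by blast
    then show "M $ (h i, j) $ (h i', j') = M $ (i,j) $ (i',j')"
      by (metis id_apply map_prod_simp)
  qed
  define gK :: "real^'q^'q \<Rightarrow> real^('q \<times> 'q)" where "gK X = (\<chi> c. X $ snd c $ fst c)" for X
  define gH :: "real^'p^'p \<Rightarrow> real^('p \<times> 'p)" where "gH X = (\<chi> c. X $ snd c $ fst c)" for X
  have lK: "linear gK" by (rule linearI) (auto simp: gK_def vec_eq_iff)
  have lH: "linear gH" by (rule linearI) (auto simp: gH_def vec_eq_iff)
  have rowsK: "rows (reshape M) \<subseteq> gK ` commutant K"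
  proof
    fix v assume "v \<in> rows (reshape M)"
    then obtain r where r: "v = reshape M $ r" by (auto simp: rows_def row_def)
    define X :: "real^'q^'q" where "X = (\<chi> j j'. M $ (snd r, j) $ (fst r, j'))"
    have "X \<in> commutant K"
      unfolding commutant_def
    proof (intro CollectI ballI)
      fix g assume g: "g \<in> K"
      show "X ** permmat g = permmat g ** X"
        using permmat_comm[OF bK[OF g]] invK[OF g] by (simp add: X_def)
    qed
    moreover have "v = gK X" by (simp add: r X_def gK_def reshape_def vec_eq_iff)
    ultimately show "v \<in> gK ` commutant K" by blast
  qed
  have colsH: "columns (reshape M) \<subseteq> gH ` commutant H"
  proof
    fix v assume "v \<in> columns (reshape M)"
    then obtain c where c: "v = column c (reshape M)" by (auto simp: columns_def)
    define X :: "real^'p^'p" where "X = (\<chi> i i'. M $ (i, snd c) $ (i', fst c))"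
    have "X \<in> commutant H"
      unfolding commutant_def
    proof (intro CollectI ballI)
      fix g assume g: "g \<in> H"
      show "X ** permmat g = permmat g ** X"
        using permmat_comm[OF bH[OF g]] invH[OF g] by (simp add: X_def)
    qed
    moreover have "v = gH X" by (simp add: c X_def gH_def reshape_def column_def vec_eq_iff)
    ultimately show "v \<in> gH ` commutant H" by blast
  qed
  have "rank (reshape M) \<le> dim (commutant K)"
    unfolding row_rank_def
    by (meson dim_image_le dim_subset lK le_trans rowsK)
  moreover have "rank (reshape M) \<le> dim (commutant H)"
    unfolding column_rank_def
    by (meson dim_image_le dim_subset lH le_trans colsH)
  ultimately show ?thesis by simp
qed

end
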